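(* Let $S$ be the antipode of $C(q)$. Then for every $n\ge0$, $\mathrm{St}_n=(-1)^nS(1_{\mathfrak{gl}_n(\mathbb{F}_q)})$.
   Context: Let $q$ be a prime power, $C_n(q)$ the complex functions on $\mathfrak{gl}_n(\mathbb{F}_q)$ invariant under $\mathrm{GL}_n(\mathbb{F}_q)$-conjugation, and $C(q)=\bigoplus_nC_n(q)$ the connected graded Hopf algebra over $\mathbb{C}$ with multiplication given by Harish-Chandra induction from block-diagonal Levis $\mathfrak{gl}_k\times\mathfrak{gl}_l\subseteq\mathfrak{gl}_{k+l}$, co-multiplication on $C_n(q)$ given by $\sum_{k+l=n}$ of Harish-Chandra restrictions to $\mathfrak{gl}_k\times\mathfrak{gl}_l$, unit/co-unit the inclusion of/projection to $C_0(q)=\mathbb{C}$. The duality operation is $\mathcal{D}_n(f)=\sum_P(-1)^{r(P)}R^{\mathcal{G}_n}_{\mathcal{L}_P}{}^*R^{\mathcal{G}_n}_{\mathcal{L}_P}(f)$, summed over the $F$-stable parabolics containing a fixed $F$-stable Borel of $\mathrm{GL}_n$, with $\mathcal{L}_P$ the Lie algebra of an $F$-stable Levi of $P$ and $r(P)$ its semisimple $\mathbb{F}_q$-rank. $1_{\mathfrak{gl}_n(\mathbb{F}_q)}$ is the constant function $1$, and the Steinberg function is $\mathrm{St}_n:=\mathcal{D}_n(1_{\mathfrak{gl}_n(\mathbb{F}_q)})$. *)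

theory Defs
  imports Complex_Main
begin

type_synonym 'a mat = "nat \<Rightarrow> nat \<Rightarrow> 'a"

definition gl :: "nat \<Rightarrow> ('a::field) mat set" where
  "gl n = {A. \<forall>i j. (n \<le> i \<or> n \<le> j) \<longrightarrow> A i j = 0}"

definition mmul :: "nat \<Rightarrow> ('a::field) mat \<Rightarrow> 'a mat \<Rightarrow> 'a mat" where
  "mmul n A B = (\<lambda>i j. if i < n \<and> j < n then (\<Sum>k<n. A i k * B k j) else 0)"

definition madd :: "('a::field) mat \<Rightarrow> 'a mat \<Rightarrow> 'a mat" where
  "madd A B = (\<lambda>i j. A i j + B i j)"

definition idm :: "nat \<Rightarrow> ('a::field) mat" where
  "idm n = (\<lambda>i j. if i = j \<and> i < n then 1 else 0)"

definition GL :: "nat \<Rightarrow> ('a::field) mat set" where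
  "GL n = {g \<in> gl n. \<exists>h \<in> gl n. mmul n g h = idm n}"

definition ginv :: "nat \<Rightarrow> ('a::field) mat \<Rightarrow> 'a mat" where
  "ginv n g = (SOME h. h \<in> gl n \<and> mmul n g h = idm n)"

definition adinv :: "nat \<Rightarrow> ('a::field) mat \<Rightarrow> 'a mat \<Rightarrow> 'a mat" where
  "adinv n g x = mmul n (mmul n (ginv n g) x) g"

text \<open>The space C_n(q) of GL_n(F_q)-conjugation invariant functions on gl_n(F_q)
  (only values on gl n are relevant).\<close>
definition invariant_fun :: "nat \<Rightarrow> (('a::field) mat \<Rightarrow> complex) \<Rightarrow> bool" where
  "invariant_fun n f \<longleftrightarrow> (\<forall>g \<in> GL n. \<forall>x \<in> gl n. f (adinv n g x) = f x)"

text \<open>block index of row/column i (blocks ordered along the diagonal); zero parts allowed\<close>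
definition blk :: "nat list \<Rightarrow> nat \<Rightarrow> nat" where
  "blk c i = card {j \<in> {1..length c}. sum_list (take j c) \<le> i}"

definition parab :: "nat list \<Rightarrow> ('a::field) mat set" where
  "parab c = {A \<in> gl (sum_list c). \<forall>i j. blk c j < blk c i \<longrightarrow> A i j = 0}"

definition nilrad :: "nat list \<Rightarrow> ('a::field) mat set" where
  "nilrad c = {A \<in> gl (sum_list c). \<forall>i j. blk c j \<le> blk c i \<longrightarrow> A i j = 0}"

definition levi_proj :: "nat list \<Rightarrow> ('a::field) mat \<Rightarrow> 'a mat" where
  "levi_proj c A = (\<lambda>i j. if blk c i = blk c j then A i j else 0)"

definition Pgrp :: "nat list \<Rightarrow> ('a::field) mat set" where
  "Pgrp c = GL (sum_list c) \<inter> parab c"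

definition Ugrp :: "nat list \<Rightarrow> ('a::field) mat set" where
  "Ugrp c = {g \<in> GL (sum_list c). (\<lambda>i j. g i j - idm (sum_list c) i j) \<in> nilrad c}"

text \<open>A function on l_c is represented as a function on matrices (evaluated on l_c only).\<close>
definition HCind :: "nat list \<Rightarrow> (('a::{finite,field}) mat \<Rightarrow> complex) \<Rightarrow> 'a mat \<Rightarrow> complex" where
  "HCind c f x = (1 / of_nat (card (Pgrp c :: 'a mat set))) *
     (\<Sum>g \<in> {g \<in> GL (sum_list c). adinv (sum_list c) g x \<in> parab c}.
         f (levi_proj c (adinv (sum_list c) g x)))"

definition HCres :: "nat list \<Rightarrow> (('a::{finite,field}) mat \<Rightarrow> complex) \<Rightarrow> 'a mat \<Rightarrow> complex" where
  "HCres c f y = (1 / of_nat (card (Ugrp c :: 'a mat set))) *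
     (\<Sum>v \<in> nilrad c. f (madd y v))"

lemma HCind_cong [fundef_cong]:
  "c = c' \<Longrightarrow> x = x' \<Longrightarrow> (\<And>y. f y = f' y) \<Longrightarrow> HCind c f x = HCind c' f' x'"
  by (simp add: HCind_def)

text \<open>standard parabolics containing the upper triangular Borel <-> compositions of n\<close>
definition compositions :: "nat \<Rightarrow> nat list set" where
  "compositions n = {c. sum_list c = n \<and> 0 \<notin> set c}"

text \<open>semisimple F_q-rank of the Levi GL_{c_1} x ... x GL_{c_r}\<close>
definition ss_rank :: "nat list \<Rightarrow> nat" where
  "ss_rank c = sum_list c - length c"

definition duality :: "nat \<Rightarrow> (('a::{finite,field}) mat \<Rightarrow> complex) \<Rightarrow> 'a mat \<Rightarrow> complex" where
  "duality n f x = (\<Sum>c \<in> compositions n. (-1) ^ ss_rank c * HCind c (HCres c f) x)"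

definition Steinberg :: "nat \<Rightarrow> ('a::{finite,field}) mat \<Rightarrow> complex" where
  "Steinberg n = duality n (\<lambda>_. 1)"

definition bdiag :: "nat \<Rightarrow> ('a::field) mat \<Rightarrow> 'a mat \<Rightarrow> 'a mat" where
  "bdiag k a b = (\<lambda>i j. if i < k \<and> j < k then a i j
                        else if k \<le> i \<and> k \<le> j then b (i - k) (j - k) else 0)"

definition upblk :: "nat \<Rightarrow> ('a::field) mat \<Rightarrow> 'a mat" where
  "upblk k y = (\<lambda>i j. if i < k \<and> j < k then y i j else 0)"

definition lowblk :: "nat \<Rightarrow> ('a::field) mat \<Rightarrow> 'a mat" where
  "lowblk k y = (\<lambda>i j. y (i + k) (j + k))"

text \<open>The antipode S of the connected graded Hopf algebra C(q), on the degree n part,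
  given by the standard recursion S(x) = - sum_{k<n} m (S (x) id) Delta_{k,n-k}(x) for n >= 1
  and S = id on C_0 = C.  Here C_k (x) C_l is identified with invariant functions on
  l_[k,l] = gl_k x gl_l, Delta_{k,l} = *R_[k,l], m = R_[k,l], and (S (x) id)(F)(diag(a,b)) =
  S_k(F(diag(-,b)))(a).\<close>
function antipode :: "nat \<Rightarrow> (('a::{finite,field}) mat \<Rightarrow> complex) \<Rightarrow> 'a mat \<Rightarrow> complex" where
  "antipode n f x =
     (if n = 0 then f x
      else - (\<Sum>k<n. HCind [k, n - k]
                (\<lambda>y. antipode k (\<lambda>a. HCres [k, n - k] f (bdiag k a (lowblk k y))) (upblk k y)) x))"
  by pat_completeness auto
termination
  by (relation "measure (\<lambda>(n, f, x). n)") auto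

end

theory Submission
  imports Defs
begin
lemma finite_gl: "finite (gl n :: ('a::{finite,field}) mat set)"
proof -
  let ?S = "{f :: nat \<times> nat \<Rightarrow> 'a. \<forall>x. (x \<in> {..<n} \<times> {..<n} \<longrightarrow> f x \<in> UNIV) \<and> (x \<notin> {..<n} \<times> {..<n} \<longrightarrow> f x = 0)}"
  have "finite ?S" by (rule finite_set_of_finite_funs) auto
  moreover have "gl n \<subseteq> curry ` ?S"
  proof
    fix A :: "'a mat" assume "A \<in> gl n"
    then have "case_prod A \<in> ?S" by (auto simp: gl_def)
    moreover have "A = curry (case_prod A)" by simp
    ultimately show "A \<in> curry ` ?S" by blast
  qed
  ultimately show ?thesis using finite_subset by blast
qed

lemma mmul_gl[simp]: "mmul n A B \<in> gl n" by (auto simp: gl_def mmul_def)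
lemma idm_gl[simp]: "idm n \<in> gl n" by (auto simp: gl_def idm_def)

lemma mmul_assoc: "mmul n (mmul n A B) C = mmul n A (mmul n B C)"
  unfolding mmul_def
  by (auto intro!: ext simp: sum_distrib_left sum_distrib_right mult.assoc intro: sum.swap)

lemma if01_mult[simp]: "(if P then 1 else 0) * (a::'a::semiring_1) = (if P then a else 0)" by simp
lemma mult_if01[simp]: "(a::'a::semiring_1) * (if P then 1 else 0) = (if P then a else 0)" by simp

lemma mmul_idm_left: "A \<in> gl n \<Longrightarrow> mmul n (idm n) A = A"
  unfolding mmul_def idm_def gl_def
  by (auto intro!: ext simp: sum.delta')

lemma mmul_idm_right: "A \<in> gl n \<Longrightarrow> mmul n A (idm n) = A"
  unfolding mmul_def idm_def gl_def
  by (auto intro!: ext simp: sum.delta')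

lemma mmul_comm_inv:
  fixes A B :: "('a::{finite,field}) mat"
  assumes A: "A \<in> gl n" and B: "B \<in> gl n" and AB: "mmul n A B = idm n"
  shows "mmul n B A = idm n"
proof -
  let ?f = "\<lambda>y. mmul n A y"
  have img: "?f ` gl n = gl n"
  proof
    show "?f ` gl n \<subseteq> gl n" by auto
    show "gl n \<subseteq> ?f ` gl n"
    proof
      fix z :: "'a mat" assume z: "z \<in> gl n"
      have "?f (mmul n B z) = z" by (simp add: mmul_assoc[symmetric] AB mmul_idm_left z)
      thus "z \<in> ?f ` gl n" by (metis image_eqI mmul_gl)
    qed
  qed
  have inj: "inj_on ?f (gl n)" by (rule eq_card_imp_inj_on[OF finite_gl]) (simp add: img)
  have "?f (mmul n B A) = ?f (idm n)" by (simp add: mmul_assoc[symmetric] AB mmul_idm_left mmul_idm_right A)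
  then show ?thesis using inj_onD[OF inj] by auto
qed

lemma GL_ginv:
  fixes g :: "('a::{finite,field}) mat"
  assumes "g \<in> GL n"
  shows "ginv n g \<in> gl n" "mmul n g (ginv n g) = idm n" "mmul n (ginv n g) g = idm n"
proof -
  have ex: "\<exists>h. h \<in> gl n \<and> mmul n g h = idm n" using assms by (auto simp: GL_def)
  show 1: "ginv n g \<in> gl n" and 2: "mmul n g (ginv n g) = idm n"
    using someI_ex[OF ex] by (auto simp: ginv_def)
  show "mmul n (ginv n g) g = idm n"
    using mmul_comm_inv[OF _ 1 2] assms by (auto simp: GL_def)
qed

lemma GL_gl: "g \<in> GL n \<Longrightarrow> g \<in> gl n" by (simp add: GL_def)

lemma GL_I: "g \<in> gl n \<Longrightarrow> h \<in> gl n \<Longrightarrow> mmul n g h = idm n \<Longrightarrow> g \<in> GL n"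
  by (auto simp: GL_def)

lemma ginv_unique:
  fixes g :: "('a::{finite,field}) mat"
  assumes g: "g \<in> gl n" and h: "h \<in> gl n" and gh: "mmul n g h = idm n"
  shows "ginv n g = h"
proof -
  have G: "g \<in> GL n" using GL_I[OF g h gh] .
  have "h = mmul n (idm n) h" using h by (simp add: mmul_idm_left)
  also have "\<dots> = mmul n (mmul n (ginv n g) g) h" using GL_ginv[OF G] by simp
  also have "\<dots> = ginv n g" by (simp only: mmul_assoc gh) (simp add: mmul_idm_right GL_ginv[OF G])
  finally show ?thesis by simp
qed

lemma idm_GL: "idm n \<in> GL n" by (rule GL_I[of _ _ "idm n"]) (auto simp: mmul_idm_left)

lemma mmul_GL:
  fixes g h :: "('a::{finite,field}) mat"
  assumes "g \<in> GL n" "h \<in> GL n" shows "mmul n g h \<in> GL n"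
proof -
  have "mmul n (mmul n g h) (mmul n (ginv n h) (ginv n g)) = mmul n g (mmul n (mmul n h (ginv n h)) (ginv n g))"
    by (simp add: mmul_assoc)
  also have "\<dots> = idm n" using GL_ginv[OF assms(1)] GL_ginv[OF assms(2)] by (simp add: mmul_idm_left)
  finally show ?thesis by (intro GL_I[OF mmul_gl mmul_gl])
qed

lemma finite_GL: "finite (GL n :: ('a::{finite,field}) mat set)"
  using finite_gl by (rule finite_subset[rotated]) (auto simp: GL_def)

lemma card_GL_pos: "card (GL n :: ('a::{finite,field}) mat set) > 0"
  using finite_GL idm_GL by (metis card_gt_0_iff empty_iff)

definition Dm :: "nat \<Rightarrow> nat \<Rightarrow> ('a::field) mat \<Rightarrow> 'a mat" where
  "Dm k n h = bdiag k h (idm (n - k))"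

lemma Dm_entry: "Dm k n a i l = (if i < k \<and> l < k then a i l
   else if k \<le> i \<and> k \<le> l then (if i = l \<and> i < n then 1 else 0) else 0)"
  by (auto simp: Dm_def bdiag_def idm_def)

lemma sum_lt_restrict:
  fixes k n :: nat
  assumes "k \<le> n" "\<And>l. k \<le> l \<Longrightarrow> l < n \<Longrightarrow> f l = 0"
  shows "sum f {..<n} = sum f {..<k}"
proof (rule sum.mono_neutral_right)
  show "finite {..<n}" by simp
  show "{..<k} \<subseteq> {..<n}" using assms(1) by auto
  show "\<forall>i\<in>{..<n} - {..<k}. f i = 0" using assms(2) by auto
qed

lemma Dm_gl: "k \<le> n \<Longrightarrow> Dm k n a \<in> gl n"
  by (auto simp: gl_def Dm_entry)

lemma Dm_mult:
  assumes kn: "k \<le> n"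
  shows "mmul n (Dm k n a) (Dm k n b) = Dm k n (mmul k a b)"
proof (intro ext)
  fix i j
  consider (tt) "i<k" "j<k" | (bb) "k \<le> i" "k \<le> j" | (tb) "i<k" "k \<le> j" | (bt) "k\<le>i" "j<k" by linarith
  then show "mmul n (Dm k n a) (Dm k n b) i j = Dm k n (mmul k a b) i j"
  proof cases
    case tt
    have "mmul n (Dm k n a) (Dm k n b) i j = (\<Sum>l<n. Dm k n a i l * Dm k n b l j)"
      using tt kn by (simp add: mmul_def)
    also have "\<dots> = (\<Sum>l<k. Dm k n a i l * Dm k n b l j)"
      by (rule sum_lt_restrict) (use kn tt in \<open>auto simp: Dm_entry\<close>)
    also have "\<dots> = (\<Sum>l<k. a i l * b l j)"
      by (intro sum.cong) (use tt in \<open>auto simp: Dm_entry\<close>)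
    finally show ?thesis using tt by (simp add: Dm_entry mmul_def)
  next
    case bb
    show ?thesis
    proof (cases "i < n \<and> j < n")
      case True
      have "mmul n (Dm k n a) (Dm k n b) i j = (\<Sum>l<n. Dm k n a i l * Dm k n b l j)"
        using True by (simp add: mmul_def)
      also have "\<dots> = (\<Sum>l<n. if l = i then (if i = j then 1 else 0) else 0)"
        by (intro sum.cong) (use bb True in \<open>auto simp: Dm_entry\<close>)
      finally show ?thesis using bb True by (simp add: Dm_entry)
    next
      case False
      then show ?thesis using bb by (auto simp: mmul_def Dm_entry)
    qed
  next
    case tb
    then show ?thesis by (auto simp: mmul_def Dm_entry intro!: sum.neutral)
  next
    case bt
    then show ?thesis by (auto simp: mmul_def Dm_entry intro!: sum.neutral)
  qed
qed

lemma Dm_idm: "k \<le> n \<Longrightarrow> Dm k n (idm k) = idm n"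
  by (auto intro!: ext simp: Dm_entry idm_def)

lemma Dm_GL:
  fixes h :: "('a::{finite,field}) mat"
  assumes kn: "k \<le> n" and h: "h \<in> GL k"
  shows "Dm k n h \<in> GL n" "ginv n (Dm k n h) = Dm k n (ginv k h)"
proof -
  have e: "mmul n (Dm k n h) (Dm k n (ginv k h)) = idm n"
    by (simp add: Dm_mult[OF kn] GL_ginv[OF h] Dm_idm[OF kn])
  show "Dm k n h \<in> GL n" by (rule GL_I[OF Dm_gl[OF kn] Dm_gl[OF kn] e])
  show "ginv n (Dm k n h) = Dm k n (ginv k h)" by (rule ginv_unique[OF Dm_gl[OF kn] Dm_gl[OF kn] e])
qed

lemma upblk_conj:
  assumes kn: "k \<le> n"
  shows "upblk k (mmul n (mmul n (Dm k n a) M) (Dm k n b)) = mmul k (mmul k a (upblk k M)) b"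
proof (intro ext)
  fix i j
  show "upblk k (mmul n (mmul n (Dm k n a) M) (Dm k n b)) i j = mmul k (mmul k a (upblk k M)) b i j"
  proof (cases "i < k \<and> j < k")
    case True
    have "upblk k (mmul n (mmul n (Dm k n a) M) (Dm k n b)) i j
        = (\<Sum>m<n. (\<Sum>l<n. Dm k n a i l * M l m) * Dm k n b m j)"
      using True kn by (simp add: upblk_def mmul_def)
    also have "\<dots> = (\<Sum>m<k. (\<Sum>l<n. Dm k n a i l * M l m) * Dm k n b m j)"
      by (rule sum_lt_restrict) (use kn True in \<open>auto simp: Dm_entry\<close>)
    also have "\<dots> = (\<Sum>m<k. (\<Sum>l<k. a i l * M l m) * b m j)"
    proof (intro sum.cong refl)
      fix m assume m: "m \<in> {..<k}"
      have "(\<Sum>l<n. Dm k n a i l * M l m) = (\<Sum>l<k. Dm k n a i l * M l m)"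
        by (rule sum_lt_restrict) (use kn True in \<open>auto simp: Dm_entry\<close>)
      also have "\<dots> = (\<Sum>l<k. a i l * M l m)"
        by (intro sum.cong) (use True in \<open>auto simp: Dm_entry\<close>)
      finally show "(\<Sum>l<n. Dm k n a i l * M l m) * Dm k n b m j = (\<Sum>l<k. a i l * M l m) * b m j"
        using m True by (simp add: Dm_entry)
    qed
    also have "\<dots> = mmul k (mmul k a (upblk k M)) b i j"
      using True by (auto simp: mmul_def upblk_def intro!: sum.cong)
    finally show ?thesis .
  next
    case False
    then show ?thesis by (auto simp: upblk_def mmul_def)
  qed
qed

definition LL :: "nat \<Rightarrow> ('a::field) mat \<Rightarrow> bool" where
  "LL k A \<longleftrightarrow> (\<forall>i j. k \<le> i \<longrightarrow> j < k \<longrightarrow> A i j = 0)"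

lemma LL_left: "LL k M \<Longrightarrow> LL k (mmul n (Dm k n a) M)"
  by (auto simp: LL_def mmul_def Dm_entry intro!: sum.neutral)

lemma LL_right: "LL k M \<Longrightarrow> LL k (mmul n M (Dm k n b))"
  by (auto simp: LL_def mmul_def Dm_entry intro!: sum.neutral)

lemma blk_pair: "blk [k, m] i = (if k + m \<le> i then 2 else if k \<le> i then 1 else 0)"
proof -
  have "{j \<in> {1..length [k, m]}. sum_list (take j [k, m]) \<le> i}
      = (if k \<le> i then {1} else {}) \<union> (if k + m \<le> i then {2} else {})"
    by (auto simp: numeral_2_eq_2 le_Suc_eq)
  then show ?thesis by (auto simp: blk_def)
qed

lemma blk_snoc: "blk (d @ [m]) i = blk d i + (if sum_list d + m \<le> i then 1 else 0)"
proof -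
  have "{j \<in> {1..length (d @ [m])}. sum_list (take j (d @ [m])) \<le> i}
      = {j \<in> {1..length d}. sum_list (take j d) \<le> i} \<union> (if sum_list d + m \<le> i then {Suc (length d)} else {})"
    by (auto simp: le_Suc_eq)
  moreover have "Suc (length d) \<notin> {j \<in> {1..length d}. sum_list (take j d) \<le> i}" by auto
  ultimately show ?thesis by (auto simp: blk_def)
qed

lemma blk_le_len: "blk d i \<le> length d"
  unfolding blk_def by (rule order_trans[OF card_mono[of "{1..length d}"]]) auto

lemma blk_lt_len: "i < sum_list d \<Longrightarrow> blk d i < length d"
proof -
  assume i: "i < sum_list d"
  have "{j \<in> {1..length d}. sum_list (take j d) \<le> i} \<subseteq> {1..<length d}"
    using i by (auto simp: le_less)
  then have "blk d i \<le> card {1..<length d}" unfolding blk_def by (intro card_mono) auto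
  moreover have "d \<noteq> []" using i by auto
  ultimately show ?thesis by (simp add: less_eq_Suc_le) (metis Suc_pred length_greater_0_conv not_less_eq_eq)
qed

lemma sum_list_take_le: "sum_list (take j (d :: nat list)) \<le> sum_list d"
proof -
  have "sum_list d = sum_list (take j d) + sum_list (drop j d)"
    by (metis append_take_drop_id sum_list_append)
  then show ?thesis by simp
qed

lemma blk_eq_len: "sum_list d \<le> i \<Longrightarrow> blk d i = length d"
proof -
  assume i: "sum_list d \<le> i"
  have "{j \<in> {1..length d}. sum_list (take j d) \<le> i} = {1..length d}"
    using i order_trans[OF sum_list_take_le] by auto
  then show ?thesis by (simp add: blk_def)
qed

lemma parab_iff: "A \<in> parab c \<longleftrightarrow> A \<in> gl (sum_list c) \<and>
   (\<forall>i j. i < sum_list c \<longrightarrow> j < sum_list c \<longrightarrow> blk c j < blk c i \<longrightarrow> A i j = 0)"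
  by (auto simp: parab_def gl_def) (meson not_less)

lemma parab_pair:
  assumes kn: "k \<le> n"
  shows "A \<in> parab [k, n - k] \<longleftrightarrow> A \<in> gl n \<and> LL k A"
proof -
  have s: "sum_list [k, n - k] = n" using kn by simp
  show ?thesis unfolding parab_iff s LL_def
  proof (intro iffI conjI allI impI)
    fix i j assume A: "A \<in> gl n \<and> (\<forall>i j. i < n \<longrightarrow> j < n \<longrightarrow> blk [k, n - k] j < blk [k, n - k] i \<longrightarrow> A i j = 0)"
      and ij: "k \<le> i" "j < k"
    show "A i j = 0"
    proof (cases "i < n")
      case True
      then show ?thesis using A ij kn by (auto simp: blk_pair)
    next
      case False
      then show ?thesis using A by (auto simp: gl_def)
    qed
  next
    fix i j assume A: "A \<in> gl n \<and> (\<forall>i j. k \<le> i \<longrightarrow> j < k \<longrightarrow> A i j = 0)"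
      and ij: "i < n" "j < n" "blk [k, n - k] j < blk [k, n - k] i"
    then show "A i j = 0" using kn by (auto simp: blk_pair split: if_splits)
  qed auto
qed

lemma blk_lt_cases:
  assumes "sum_list d = k"
  shows "blk d j < blk d i \<longleftrightarrow> (j < k \<and> k \<le> i) \<or> (i < k \<and> j < k \<and> blk d j < blk d i)"
  using assms blk_lt_len[of j d] blk_lt_len[of i d] blk_eq_len[of d i] blk_eq_len[of d j] blk_le_len[of d i]
  by (cases "i < k"; cases "j < k") auto

lemma upblk_gl[simp]: "upblk k A \<in> gl k"
  by (auto simp: upblk_def gl_def)

lemma parab_snoc:
  assumes k: "sum_list d = k"
  shows "A \<in> parab (d @ [m]) \<longleftrightarrow> A \<in> parab [k, m] \<and> upblk k A \<in> parab d"
proof -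
  have b: "i < k + m \<Longrightarrow> blk (d @ [m]) i = blk d i" for i using k by (simp add: blk_snoc)
  have bp: "i < k + m \<Longrightarrow> blk [k, m] i = (if k \<le> i then 1 else 0)" for i by (simp add: blk_pair)
  show ?thesis unfolding parab_iff using k
    apply (simp add: b bp)
    apply (subst blk_lt_cases[OF k])
    apply (auto simp: upblk_def split: if_splits)
    done
qed

lemma DD_inv:
  fixes h :: "('a::{finite,field}) mat"
  assumes kn: "k \<le> n" and h: "h \<in> GL k"
  shows "mmul n (Dm k n h) (Dm k n (ginv k h)) = idm n" "mmul n (Dm k n (ginv k h)) (Dm k n h) = idm n"
  by (simp_all add: Dm_mult[OF kn] GL_ginv[OF h] Dm_idm[OF kn])

lemma count_bij:
  fixes Q :: "('a::{finite,field}) mat \<Rightarrow> 'a mat \<Rightarrow> bool"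
  assumes kn: "k \<le> n"
  shows "card {(g, h). g \<in> GL n \<and> h \<in> GL k \<and> Q (mmul n g (Dm k n h)) h}
       = card {(g, h). g \<in> GL n \<and> h \<in> GL k \<and> Q g h}"
proof (rule bij_betw_same_card)
  show "bij_betw (\<lambda>(g, h). (mmul n g (Dm k n h), h))
      {(g, h). g \<in> GL n \<and> h \<in> GL k \<and> Q (mmul n g (Dm k n h)) h}
      {(g, h). g \<in> GL n \<and> h \<in> GL k \<and> Q g h}"
  proof (rule bij_betw_byWitness[where f' = "\<lambda>(g, h). (mmul n g (Dm k n (ginv k h)), h)"])
    show "\<forall>a\<in>{(g, h). g \<in> GL n \<and> h \<in> GL k \<and> Q (mmul n g (Dm k n h)) h}.
        (\<lambda>(g, h). (mmul n g (Dm k n (ginv k h)), h)) ((\<lambda>(g, h). (mmul n g (Dm k n h), h)) a) = a"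
      by (auto simp: mmul_assoc DD_inv[OF kn] mmul_idm_right GL_gl)
    show "\<forall>a'\<in>{(g, h). g \<in> GL n \<and> h \<in> GL k \<and> Q g h}.
        (\<lambda>(g, h). (mmul n g (Dm k n h), h)) ((\<lambda>(g, h). (mmul n g (Dm k n (ginv k h)), h)) a') = a'"
      by (auto simp: mmul_assoc DD_inv[OF kn] mmul_idm_right GL_gl)
    show "(\<lambda>(g, h). (mmul n g (Dm k n h), h)) ` {(g, h). g \<in> GL n \<and> h \<in> GL k \<and> Q (mmul n g (Dm k n h)) h}
        \<subseteq> {(g, h). g \<in> GL n \<and> h \<in> GL k \<and> Q g h}"
      by (auto intro: mmul_GL Dm_GL[OF kn])
    show "(\<lambda>(g, h). (mmul n g (Dm k n (ginv k h)), h)) ` {(g, h). g \<in> GL n \<and> h \<in> GL k \<and> Q g h}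
        \<subseteq> {(g, h). g \<in> GL n \<and> h \<in> GL k \<and> Q (mmul n g (Dm k n h)) h}"
    proof (clarsimp)
      fix g h assume g: "g \<in> GL n" and h: "h \<in> GL k" and q: "Q g h"
      have hi: "ginv k h \<in> GL k" using GL_I[OF GL_ginv(1)[OF h] GL_gl[OF h] GL_ginv(3)[OF h]] .
      show "mmul n g (Dm k n (ginv k h)) \<in> GL n \<and> Q (mmul n (mmul n g (Dm k n (ginv k h))) (Dm k n h)) h"
        using g h q hi by (auto simp: mmul_assoc DD_inv[OF kn] mmul_idm_right GL_gl intro: mmul_GL Dm_GL[OF kn])
    qed
  qed
qed

lemma adinv_gl[simp]: "adinv n g x \<in> gl n" by (simp add: adinv_def)

lemma adinv_conj:
  fixes g h x :: "('a::{finite,field}) mat"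
  assumes kn: "k \<le> n" and g: "g \<in> GL n" and h: "h \<in> GL k"
  shows "adinv n (mmul n g (Dm k n h)) x = mmul n (mmul n (Dm k n (ginv k h)) (adinv n g x)) (Dm k n h)"
proof -
  have "mmul n (mmul n g (Dm k n h)) (mmul n (Dm k n (ginv k h)) (ginv n g)) = idm n"
    by (simp add: mmul_assoc[symmetric]) (simp add: mmul_assoc DD_inv[OF kn h] mmul_idm_left GL_ginv[OF g])
  then have "ginv n (mmul n g (Dm k n h)) = mmul n (Dm k n (ginv k h)) (ginv n g)"
    by (intro ginv_unique) auto
  then show ?thesis by (simp add: adinv_def mmul_assoc)
qed

lemma LL_conj_iff:
  fixes h M :: "('a::{finite,field}) mat"
  assumes kn: "k \<le> n" and h: "h \<in> GL k" and M: "M \<in> gl n"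
  shows "LL k (mmul n (mmul n (Dm k n (ginv k h)) M) (Dm k n h)) \<longleftrightarrow> LL k M"
proof
  assume L: "LL k (mmul n (mmul n (Dm k n (ginv k h)) M) (Dm k n h))"
  have "M = mmul n (mmul n (Dm k n h) (mmul n (mmul n (Dm k n (ginv k h)) M) (Dm k n h))) (Dm k n (ginv k h))"
    by (simp add: mmul_assoc) (simp add: mmul_assoc[symmetric] DD_inv[OF kn h] mmul_idm_left mmul_idm_right M)
  then show "LL k M" using LL_right[OF LL_left[OF L]] by metis
qed (rule LL_right[OF LL_left])

lemma cond_star:
  fixes g h x :: "('a::{finite,field}) mat"
  assumes kn: "k \<le> n" and d: "sum_list d = k" and g: "g \<in> GL n" and h: "h \<in> GL k"
  shows "adinv n (mmul n g (Dm k n h)) x \<in> parab (d @ [n - k]) \<longleftrightarrow>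
     adinv n g x \<in> parab [k, n - k] \<and> adinv k h (upblk k (adinv n g x)) \<in> parab d"
proof -
  have n: "k + (n - k) = n" using kn by simp
  show ?thesis
    unfolding adinv_conj[OF kn g h] parab_snoc[OF d] parab_pair[OF kn]
    by (simp add: LL_conj_iff[OF kn h] upblk_conj[OF kn] adinv_def[of k])
qed

lemma star:
  fixes x :: "('a::{finite,field}) mat"
  assumes kn: "k \<le> n" and d: "sum_list d = k"
  shows "(\<Sum>g\<in>{g \<in> GL n. adinv n g x \<in> parab [k, n - k]}.
            card {h \<in> GL k. adinv k h (upblk k (adinv n g x)) \<in> parab d})
       = card (GL k :: 'a mat set) * card {g \<in> GL n. adinv n g x \<in> parab (d @ [n - k])}"
proof -
  let ?Q = "\<lambda>g' (h::'a mat). adinv n g' x \<in> parab (d @ [n - k])"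
  have "(\<Sum>g\<in>{g \<in> GL n. adinv n g x \<in> parab [k, n - k]}.
            card {h \<in> GL k. adinv k h (upblk k (adinv n g x)) \<in> parab d})
      = card (SIGMA g:{g \<in> GL n. adinv n g x \<in> parab [k, n - k]}. {h \<in> GL k. adinv k h (upblk k (adinv n g x)) \<in> parab d})"
    by (rule card_SigmaI[symmetric]) (auto intro: finite_subset[OF _ finite_GL])
  also have "(SIGMA g:{g \<in> GL n. adinv n g x \<in> parab [k, n - k]}. {h \<in> GL k. adinv k h (upblk k (adinv n g x)) \<in> parab d})
      = {(g, h). g \<in> GL n \<and> h \<in> GL k \<and> ?Q (mmul n g (Dm k n h)) h}"
    using cond_star[OF kn d] by auto
  also have "card \<dots> = card {(g, h). g \<in> GL n \<and> h \<in> GL k \<and> ?Q g h}"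
    by (rule count_bij[OF kn])
  also have "{(g, h). g \<in> GL n \<and> h \<in> GL k \<and> ?Q g h} = {g \<in> GL n. adinv n g x \<in> parab (d @ [n - k])} \<times> GL k"
    by auto
  finally show ?thesis by (simp add: card_cartesian_product)
qed

lemma upblk_idm: "k \<le> n \<Longrightarrow> upblk k (idm n) = idm k"
  by (auto intro!: ext simp: upblk_def idm_def)

lemma upblk_mmul_LL:
  assumes kn: "k \<le> n" and p: "LL k p"
  shows "upblk k (mmul n h p) = mmul k (upblk k h) (upblk k p)"
proof (intro ext)
  fix i j
  show "upblk k (mmul n h p) i j = mmul k (upblk k h) (upblk k p) i j"
  proof (cases "i < k \<and> j < k")
    case True
    have "upblk k (mmul n h p) i j = (\<Sum>l<n. h i l * p l j)" using True kn by (simp add: upblk_def mmul_def)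
    also have "\<dots> = (\<Sum>l<k. h i l * p l j)"
      by (rule sum_lt_restrict) (use kn True p in \<open>auto simp: LL_def\<close>)
    finally show ?thesis using True by (auto simp: mmul_def upblk_def intro!: sum.cong)
  qed (auto simp: upblk_def mmul_def)
qed

lemma upblk_GL:
  fixes p :: "('a::{finite,field}) mat"
  assumes kn: "k \<le> n" and p: "p \<in> GL n" and L: "LL k p"
  shows "upblk k p \<in> GL k"
proof -
  have "mmul k (upblk k (ginv n p)) (upblk k p) = idm k"
    using upblk_mmul_LL[OF kn L, of "ginv n p"] by (simp add: GL_ginv(3)[OF p] upblk_idm[OF kn])
  then have "mmul k (upblk k p) (upblk k (ginv n p)) = idm k"
    by (rule mmul_comm_inv[OF upblk_gl upblk_gl])
  then show ?thesis by (rule GL_I[OF upblk_gl upblk_gl])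
qed

lemma ginv_GL: "g \<in> GL n \<Longrightarrow> ginv n (g :: ('a::{finite,field}) mat) \<in> GL n"
  using GL_I[OF GL_ginv(1) GL_gl GL_ginv(3)] .

lemma inner_count:
  fixes P :: "('a::{finite,field}) mat"
  assumes P: "P \<in> GL k"
  shows "card {h \<in> GL k. mmul k P h \<in> parab d} = card (GL k \<inter> parab d :: 'a mat set)"
proof -
  have "bij_betw (\<lambda>h. mmul k P h) {h \<in> GL k. mmul k P h \<in> parab d} (GL k \<inter> parab d :: 'a mat set)"
  proof (rule bij_betw_byWitness[where f' = "\<lambda>q. mmul k (ginv k P) q"])
    show "\<forall>a\<in>{h \<in> GL k. mmul k P h \<in> parab d}. mmul k (ginv k P) (mmul k P a) = a"
      by (auto simp: mmul_assoc[symmetric] GL_ginv[OF P] mmul_idm_left GL_gl)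
    show "\<forall>a'\<in>GL k \<inter> parab d. mmul k P (mmul k (ginv k P) a') = a'"
      by (auto simp: mmul_assoc[symmetric] GL_ginv[OF P] mmul_idm_left GL_gl)
    show "(\<lambda>h. mmul k P h) ` {h \<in> GL k. mmul k P h \<in> parab d} \<subseteq> GL k \<inter> parab d"
      using P by (auto intro: mmul_GL)
    show "(\<lambda>q. mmul k (ginv k P) q) ` (GL k \<inter> parab d) \<subseteq> {h \<in> GL k. mmul k P h \<in> parab d}"
      using P by (auto intro!: mmul_GL ginv_GL simp: mmul_assoc[symmetric] GL_ginv[OF P] mmul_idm_left GL_gl)
  qed
  then show ?thesis by (rule bij_betw_same_card)
qed

lemma cond_starstar:
  fixes p h :: "('a::{finite,field}) mat"
  assumes kn: "k \<le> n" and d: "sum_list d = k" and p: "p \<in> GL n" and h: "h \<in> GL k"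
  shows "mmul n p (Dm k n h) \<in> parab (d @ [n - k]) \<longleftrightarrow>
     p \<in> parab [k, n - k] \<and> mmul k (upblk k p) h \<in> parab d"
proof -
  have pg: "p \<in> gl n" using p by (rule GL_gl)
  have e: "mmul n p (Dm k n h) = mmul n (mmul n (Dm k n (idm k)) p) (Dm k n h)"
    by (simp add: Dm_idm[OF kn] mmul_idm_left pg)
  have u: "upblk k (mmul n p (Dm k n h)) = mmul k (upblk k p) h"
    by (subst e, subst upblk_conj[OF kn]) (simp add: mmul_idm_left)
  have l: "LL k (mmul n p (Dm k n h)) \<longleftrightarrow> LL k p"
  proof
    assume L: "LL k (mmul n p (Dm k n h))"
    have "p = mmul n (mmul n p (Dm k n h)) (Dm k n (ginv k h))"
      by (simp add: mmul_assoc DD_inv[OF kn h] mmul_idm_right pg)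
    then show "LL k p" using LL_right[OF L] by metis
  qed (rule LL_right)
  show ?thesis unfolding parab_snoc[OF d] parab_pair[OF kn] u l using pg by simp
qed

lemma starstar:
  assumes kn: "k \<le> n" and d: "sum_list d = k"
  shows "card (Pgrp [k, n - k] :: ('a::{finite,field}) mat set) * card (Pgrp d :: 'a mat set)
       = card (Pgrp (d @ [n - k]) :: 'a mat set) * card (GL k :: 'a mat set)"
proof -
  let ?Q = "\<lambda>(g'::'a mat) (h::'a mat). g' \<in> parab (d @ [n - k])"
  have s1: "sum_list [k, n - k] = n" "sum_list (d @ [n - k]) = n" using kn d by auto
  have P2: "(Pgrp [k, n - k] :: 'a mat set) = GL n \<inter> parab [k, n - k]"
    unfolding Pgrp_def s1(1) ..
  have Pc: "(Pgrp (d @ [n - k]) :: 'a mat set) = GL n \<inter> parab (d @ [n - k])"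
    unfolding Pgrp_def s1(2) ..
  have Pd: "(Pgrp d :: 'a mat set) = GL k \<inter> parab d"
    unfolding Pgrp_def d ..
  have "(\<Sum>p\<in>(Pgrp [k, n - k] :: 'a mat set). card {h \<in> GL k. mmul k (upblk k p) h \<in> parab d})
        = (\<Sum>p\<in>(Pgrp [k, n - k] :: 'a mat set). card (Pgrp d :: 'a mat set))"
  proof (intro sum.cong refl)
    fix p :: "'a mat" assume "p \<in> Pgrp [k, n - k]"
    then have p: "p \<in> GL n" "LL k p" using parab_pair[OF kn] unfolding P2 by auto
    show "card {h \<in> GL k. mmul k (upblk k p) h \<in> parab d} = card (Pgrp d :: 'a mat set)"
      unfolding Pd by (rule inner_count[OF upblk_GL[OF kn p]])
  qed
  then have "card (Pgrp [k, n - k] :: 'a mat set) * card (Pgrp d :: 'a mat set)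
      = (\<Sum>p\<in>(Pgrp [k, n - k] :: 'a mat set). card {h \<in> GL k. mmul k (upblk k p) h \<in> parab d})"
    by simp
  also have "\<dots> = card (SIGMA p:(Pgrp [k, n - k] :: 'a mat set). {h \<in> GL k. mmul k (upblk k p) h \<in> parab d})"
    by (rule card_SigmaI[symmetric]) (auto simp: P2 intro: finite_subset[OF _ finite_GL])
  also have "(SIGMA p:(Pgrp [k, n - k] :: 'a mat set). {h \<in> GL k. mmul k (upblk k p) h \<in> parab d})
      = {(g, h). g \<in> GL n \<and> h \<in> GL k \<and> ?Q (mmul n g (Dm k n h)) h}"
  proof (intro set_eqI iffI)
    fix z assume "z \<in> (SIGMA p:(Pgrp [k, n - k] :: 'a mat set). {h \<in> GL k. mmul k (upblk k p) h \<in> parab d})"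
    then show "z \<in> {(g, h). g \<in> GL n \<and> h \<in> GL k \<and> ?Q (mmul n g (Dm k n h)) h}"
      unfolding P2 using cond_starstar[OF kn d] by auto
  next
    fix z assume "z \<in> {(g, h). g \<in> GL n \<and> h \<in> GL k \<and> ?Q (mmul n g (Dm k n h)) h}"
    then show "z \<in> (SIGMA p:(Pgrp [k, n - k] :: 'a mat set). {h \<in> GL k. mmul k (upblk k p) h \<in> parab d})"
      unfolding P2 using cond_starstar[OF kn d] by auto
  qed
  also have "card \<dots> = card {(g, h). g \<in> GL n \<and> h \<in> GL k \<and> ?Q g h}"
    by (rule count_bij[OF kn])
  also have "{(g, h). g \<in> GL n \<and> h \<in> GL k \<and> ?Q g h} = (Pgrp (d @ [n - k]) :: 'a mat set) \<times> GL k"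
    unfolding Pc by auto
  finally show ?thesis by (simp add: card_cartesian_product)
qed

section \<open>Unipotent radical: HC restriction of the constant function\<close>

lemma madd_mmul_entry:
  assumes y: "y \<in> gl n" and ij: "i < n" "j < n"
  shows "mmul n (madd (idm n) v) y i j = y i j + (\<Sum>l<n. v i l * y l j)"
proof -
  have "mmul n (madd (idm n) v) y i j = (\<Sum>l<n. idm n i l * y l j + v i l * y l j)"
    using ij by (simp add: mmul_def madd_def distrib_right)
  also have "\<dots> = (\<Sum>l<n. idm n i l * y l j) + (\<Sum>l<n. v i l * y l j)"
    by (rule sum.distrib)
  also have "(\<Sum>l<n. idm n i l * y l j) = y i j"
    using ij by (simp add: idm_def sum.delta)
  finally show ?thesis .
qed

lemma nilrad_inj:
  assumes v: "v \<in> nilrad c" and n: "n = sum_list c"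
  shows "inj_on (\<lambda>y. mmul n (madd (idm n) v) y) (gl n)"
proof (rule inj_onI)
  fix y y' assume y: "y \<in> gl n" and y': "y' \<in> gl n"
    and e: "mmul n (madd (idm n) v) y = mmul n (madd (idm n) v) y'"
  have vz: "\<And>i l. blk c l \<le> blk c i \<Longrightarrow> v i l = 0" using v by (auto simp: nilrad_def)
  have "\<forall>i. y i j = y' i j" for j
  proof
    fix i
    show "y i j = y' i j"
    proof (induction i rule: measure_induct_rule[where f = "\<lambda>i. length c - blk c i"])
      case (less i)
      show ?case
      proof (cases "i < n \<and> j < n")
        case True
        have s: "(\<Sum>l<n. v i l * y l j) = (\<Sum>l<n. v i l * y' l j)"
        proof (intro sum.cong refl)
          fix l assume "l \<in> {..<n}"
          show "v i l * y l j = v i l * y' l j"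
          proof (cases "blk c l \<le> blk c i")
            case True then show ?thesis by (simp add: vz)
          next
            case False
            then have "length c - blk c l < length c - blk c i" using blk_le_len[of c l] by linarith
            then show ?thesis using less by simp
          qed
        qed
        have "y i j + (\<Sum>l<n. v i l * y l j) = y' i j + (\<Sum>l<n. v i l * y' l j)"
          using madd_mmul_entry[OF y True[THEN conjunct1] True[THEN conjunct2]]
            madd_mmul_entry[OF y' True[THEN conjunct1] True[THEN conjunct2]] e by metis
        then show ?thesis using s by simp
      next
        case False
        then show ?thesis using y y' by (auto simp: gl_def)
      qed
    qed
  qed
  then show "y = y'" by (intro ext) auto
qed

lemma nilrad_GL:
  fixes v :: "('a::{finite,field}) mat"
  assumes v: "v \<in> nilrad c" and n: "n = sum_list c"
  shows "madd (idm n) v \<in> GL n"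
proof -
  let ?f = "\<lambda>y. mmul n (madd (idm n) v) y"
  have "?f ` gl n = gl n"
    by (rule endo_inj_surj[OF finite_gl _ nilrad_inj[OF v n]]) auto
  then obtain h where h: "h \<in> gl n" "?f h = idm n" by (metis idm_gl imageE)
  have "madd (idm n) v \<in> gl n" using v n by (auto simp: nilrad_def gl_def madd_def idm_def)
  then show ?thesis using h by (intro GL_I) auto
qed

lemma HCres_one: "HCres c (\<lambda>_. 1) y = (1::complex)"
proof -
  let ?n = "sum_list c"
  have "bij_betw (madd (idm ?n)) (nilrad c) (Ugrp c :: ('a::{finite,field}) mat set)"
  proof (rule bij_betw_byWitness[where f' = "\<lambda>g i j. g i j - idm ?n i j"])
    show "\<forall>a\<in>nilrad c. (\<lambda>i j. madd (idm ?n) a i j - idm ?n i j) = a" by (auto simp: madd_def)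
    show "\<forall>a'\<in>(Ugrp c :: 'a mat set). madd (idm ?n) (\<lambda>i j. a' i j - idm ?n i j) = a'" by (auto simp: madd_def)
    show "madd (idm ?n) ` nilrad c \<subseteq> (Ugrp c :: 'a mat set)"
    proof
      fix g assume "g \<in> madd (idm ?n) ` (nilrad c :: 'a mat set)"
      then obtain v where v: "v \<in> nilrad c" and g: "g = madd (idm ?n) v" by auto
      have "g \<in> GL ?n" using nilrad_GL[OF v refl] g by simp
      moreover have "(\<lambda>i j. g i j - idm ?n i j) = v" using g by (auto simp: madd_def)
      ultimately show "g \<in> Ugrp c" using v by (simp add: Ugrp_def)
    qed
    show "(\<lambda>g i j. g i j - idm ?n i j) ` (Ugrp c :: 'a mat set) \<subseteq> nilrad c"
      by (auto simp: Ugrp_def)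
  qed
  then have cu: "card (Ugrp c :: 'a mat set) = card (nilrad c :: 'a mat set)"
    by (simp add: bij_betw_same_card)
  have "finite (nilrad c :: 'a mat set)" by (rule finite_subset[OF _ finite_gl]) (auto simp: nilrad_def)
  moreover have "(\<lambda>i j. 0) \<in> (nilrad c :: 'a mat set)" by (auto simp: nilrad_def gl_def)
  ultimately have "card (nilrad c :: 'a mat set) > 0" by (auto simp: card_gt_0_iff)
  then show ?thesis by (simp add: HCres_def cu)
qed

section \<open>Compositions\<close>

lemma length_le_sum: "0 \<notin> set (c :: nat list) \<Longrightarrow> length c \<le> sum_list c"
proof (induction c)
  case (Cons a c)
  then show ?case by (cases a) auto
qed simp

lemma finite_compositions: "finite (compositions n)"
proof (rule finite_subset)
  show "compositions n \<subseteq> {xs. set xs \<subseteq> {0..n} \<and> length xs \<le> n}"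
    using length_le_sum member_le_sum_list by (fastforce simp: compositions_def)
  show "finite {xs. set xs \<subseteq> {0..n} \<and> length xs \<le> n}"
    by (rule finite_lists_length_le) simp
qed

lemma compositions_0: "compositions 0 = {[]}"
  by (auto simp: compositions_def) (metis last_in_set)

lemma compositions_reindex:
  assumes n: "0 < n"
  shows "(\<Sum>c\<in>compositions n. F c) = (\<Sum>k<n. \<Sum>d\<in>compositions k. F (d @ [n - k]))"
proof -
  have "(\<Sum>k<n. \<Sum>d\<in>compositions k. F (d @ [n - k]))
      = (\<Sum>(k, d)\<in>(SIGMA k:{..<n}. compositions k). F (d @ [n - k]))"
    by (rule sum.Sigma) (auto simp: finite_compositions)
  also have "\<dots> = (\<Sum>x\<in>(SIGMA k:{..<n}. compositions k). F ((\<lambda>(k, d). d @ [n - k]) x))"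
    by (rule sum.cong) auto
  also have "\<dots> = (\<Sum>c\<in>compositions n. F c)"
  proof (rule sum.reindex_bij_betw)
    show "bij_betw (\<lambda>(k, d). d @ [n - k]) (SIGMA k:{..<n}. compositions k) (compositions n)"
    proof (rule bij_betw_byWitness[where f' = "\<lambda>c. (n - last c, butlast c)"])
      show "\<forall>a\<in>SIGMA k:{..<n}. compositions k. (\<lambda>c. (n - last c, butlast c)) ((\<lambda>(k, d). d @ [n - k]) a) = a"
        by auto
      show "\<forall>a'\<in>compositions n. (\<lambda>(k, d). d @ [n - k]) ((\<lambda>c. (n - last c, butlast c)) a') = a'"
      proof
        fix c assume c: "c \<in> compositions n"
        then have ne: "c \<noteq> []" using n by (auto simp: compositions_def)
        have "last c \<le> n" using c ne member_le_sum_list[of "last c" c] by (auto simp: compositions_def)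
        then show "(\<lambda>(k, d). d @ [n - k]) ((\<lambda>c. (n - last c, butlast c)) c) = c"
          using ne by (simp add: append_butlast_last_id)
      qed
      show "(\<lambda>(k, d). d @ [n - k]) ` (SIGMA k:{..<n}. compositions k) \<subseteq> compositions n"
        by (auto simp: compositions_def)
      show "(\<lambda>c. (n - last c, butlast c)) ` compositions n \<subseteq> (SIGMA k:{..<n}. compositions k)"
      proof
        fix z assume "z \<in> (\<lambda>c. (n - last c, butlast c)) ` compositions n"
        then obtain c where c: "c \<in> compositions n" and z: "z = (n - last c, butlast c)" by auto
        then have ne: "c \<noteq> []" using n by (auto simp: compositions_def)
        have cc: "c = butlast c @ [last c]" using ne by simp
        have "sum_list c = n" using c by (simp add: compositions_def)
        then have "sum_list (butlast c @ [last c]) = n" using cc by simp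
        then have sc: "sum_list (butlast c) + last c = n" by simp
        have "last c \<in> set c" using ne by simp
        then have lp: "last c > 0" using c by (auto simp: compositions_def intro!: Nat.gr0I)
        have "0 \<notin> set (butlast c)" using c in_set_butlastD by (fastforce simp: compositions_def)
        then show "z \<in> (SIGMA k:{..<n}. compositions k)"
          using z sc lp by (auto simp: compositions_def)
      qed
    qed
  qed
  finally show ?thesis by simp
qed

declare antipode.simps[simp del]

lemma antipode_0: "antipode 0 f x = f x"
  by (subst antipode.simps) simp

lemma antipode_pos: "0 < n \<Longrightarrow> antipode n f x = - (\<Sum>k<n. HCind [k, n - k]
                (\<lambda>y. antipode k (\<lambda>a. HCres [k, n - k] f (bdiag k a (lowblk k y))) (upblk k y)) x)"
  by (subst antipode.simps) simp

definition Nc :: "nat list \<Rightarrow> ('a::{finite,field}) mat \<Rightarrow> nat" where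
  "Nc c x = card {g \<in> GL (sum_list c). adinv (sum_list c) g x \<in> parab c}"

definition StF :: "nat \<Rightarrow> ('a::{finite,field}) mat \<Rightarrow> complex" where
  "StF n x = (\<Sum>c\<in>compositions n. (-1) ^ ss_rank c *
      (of_nat (Nc c x) / of_nat (card (Pgrp c :: 'a mat set))))"

lemma Pgrp_pos: "card (Pgrp c :: ('a::{finite,field}) mat set) > 0"
proof -
  have "idm (sum_list c) \<in> (Pgrp c :: 'a mat set)"
    using idm_GL idm_gl by (auto simp: Pgrp_def parab_def) (auto simp: idm_def)
  moreover have "finite (Pgrp c :: 'a mat set)" using finite_GL by (auto simp: Pgrp_def)
  ultimately show ?thesis by (auto simp: card_gt_0_iff)
qed

lemma Steinberg_StF: "Steinberg n x = StF n x"
  unfolding Steinberg_def duality_def StF_def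
  by (intro sum.cong refl) (simp add: HCres_one HCind_def Nc_def)

lemma key:
  fixes x :: "('a::{finite,field}) mat"
  assumes kn: "k \<le> n" and d: "sum_list d = k"
  shows "(1 / of_nat (card (Pgrp [k, n - k] :: 'a mat set))) *
      (\<Sum>g\<in>{g \<in> GL n. adinv n g x \<in> parab [k, n - k]}.
         of_nat (Nc d (upblk k (adinv n g x))) / of_nat (card (Pgrp d :: 'a mat set)))
    = (of_nat (Nc (d @ [n - k]) x) / of_nat (card (Pgrp (d @ [n - k]) :: 'a mat set)) :: complex)"
proof -
  have s2: "sum_list (d @ [n - k]) = n" using kn d by simp
  have "(\<Sum>g\<in>{g \<in> GL n. adinv n g x \<in> parab [k, n - k]}. of_nat (Nc d (upblk k (adinv n g x))))
      = (of_nat (card (GL k :: 'a mat set) * Nc (d @ [n - k]) x) :: complex)"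
    unfolding of_nat_sum[symmetric] Nc_def d s2 by (simp only: star[OF kn d])
  moreover have "(of_nat (card (Pgrp [k, n - k] :: 'a mat set)) * of_nat (card (Pgrp d :: 'a mat set)) :: complex)
      = of_nat (card (Pgrp (d @ [n - k]) :: 'a mat set)) * of_nat (card (GL k :: 'a mat set))"
    unfolding of_nat_mult[symmetric] starstar[OF kn d] ..
  moreover have "card (GL k :: 'a mat set) > 0" "card (Pgrp (d @ [n - k]) :: 'a mat set) > 0"
    "card (Pgrp [k, n - k] :: 'a mat set) > 0" "card (Pgrp d :: 'a mat set) > 0"
    by (simp_all add: card_GL_pos Pgrp_pos)
  ultimately show ?thesis
    by (simp add: sum_divide_distrib[symmetric] field_simps)
qed

lemma sign_lemma:
  assumes "L \<le> k" "k < n"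
  shows "(-1::complex) ^ n * (-1) ^ (n - Suc L) = - ((-1) ^ k * (-1) ^ (k - L))"
proof -
  obtain a where n: "n = Suc L + a" using assms by (metis Suc_leI le_Suc_ex order.strict_trans1)
  obtain b where k: "k = L + b" using assms by (metis le_Suc_ex)
  have e: "(-1::complex) ^ a * (-1) ^ a = 1" "(-1::complex) ^ b * (-1) ^ b = 1"
    by (simp_all add: power_add[symmetric] flip: mult_2)
  have "(-1::complex) ^ n * (-1) ^ (n - Suc L) = - ((-1) ^ L * ((-1) ^ a * (-1) ^ a))"
    by (simp add: n power_add)
  also have "\<dots> = - ((-1) ^ L * ((-1) ^ b * (-1) ^ b))" using e by simp
  also have "\<dots> = - ((-1) ^ k * (-1) ^ (k - L))" by (simp add: k power_add mult_ac)
  finally show ?thesis .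
qed

lemma upblk_levi: "upblk k (levi_proj [k, m] M) = upblk k M"
  by (auto intro!: ext simp: upblk_def levi_proj_def blk_pair)

lemma main_lemma: "antipode n (\<lambda>_. 1) x = (-1) ^ n * StF n (x :: ('a::{finite,field}) mat)"
proof (induction n arbitrary: x rule: less_induct)
  case (less n)
  show ?case
  proof (cases "n = 0")
    case True
    have p0: "\<And>A. (A :: 'a mat) \<in> parab [] \<longleftrightarrow> A \<in> gl 0" by (simp add: parab_iff)
    have "{g \<in> GL 0. adinv 0 g x \<in> parab []} = (GL 0 :: 'a mat set)" by (auto simp: p0)
    moreover have "(Pgrp [] :: 'a mat set) = GL 0" by (auto simp: Pgrp_def p0 GL_gl)
    ultimately show ?thesis using True card_GL_pos[where n = 0 and 'a = 'a]
      by (simp add: antipode_0 StF_def compositions_0 Nc_def ss_rank_def)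
  next
    case False
    then have pos: "0 < n" by simp
    have IH: "\<And>k y. k < n \<Longrightarrow> antipode k (\<lambda>_. 1) y = (-1) ^ k * StF k (y :: 'a mat)"
      using less.IH by blast
    let ?NP = "\<lambda>c. (of_nat (Nc c x) / of_nat (card (Pgrp c :: 'a mat set)) :: complex)"
    have A: "antipode n (\<lambda>_. 1) x = - (\<Sum>k<n. (1 / of_nat (card (Pgrp [k, n - k] :: 'a mat set))) *
        (\<Sum>g\<in>{g \<in> GL n. adinv n g x \<in> parab [k, n - k]}. antipode k (\<lambda>_. 1) (upblk k (adinv n g x))))"
      unfolding antipode_pos[OF pos]
    proof (intro arg_cong[where f = uminus] sum.cong refl)
      fix k assume "k \<in> {..<n}"
      then have s: "sum_list [k, n - k] = n" by simp
      show "HCind [k, n - k] (\<lambda>y. antipode k (\<lambda>a. HCres [k, n - k] (\<lambda>_. 1) (bdiag k a (lowblk k y))) (upblk k y)) x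
         = (1 / of_nat (card (Pgrp [k, n - k] :: 'a mat set))) *
        (\<Sum>g\<in>{g \<in> GL n. adinv n g x \<in> parab [k, n - k]}. antipode k (\<lambda>_. 1) (upblk k (adinv n g x)))"
        unfolding HCind_def s by (simp add: HCres_one upblk_levi)
    qed
    have T: "(1 / of_nat (card (Pgrp [k, n - k] :: 'a mat set))) *
        (\<Sum>g\<in>{g \<in> GL n. adinv n g x \<in> parab [k, n - k]}. antipode k (\<lambda>_. 1) (upblk k (adinv n g x)))
      = (-1) ^ k * (\<Sum>d\<in>compositions k. (-1) ^ ss_rank d * ?NP (d @ [n - k]))" if k: "k < n" for k
    proof -
      let ?G = "{g \<in> GL n. adinv n g x \<in> parab [k, n - k]}"
      let ?P2 = "of_nat (card (Pgrp [k, n - k] :: 'a mat set)) :: complex"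
      let ?h = "\<lambda>d g. (of_nat (Nc d (upblk k (adinv n g x))) / of_nat (card (Pgrp d :: 'a mat set)) :: complex)"
      have "(\<Sum>g\<in>?G. antipode k (\<lambda>_. 1) (upblk k (adinv n g x)))
          = (\<Sum>g\<in>?G. (-1) ^ k * (\<Sum>d\<in>compositions k. (-1) ^ ss_rank d * ?h d g))"
        by (intro sum.cong refl) (simp add: IH[OF k] StF_def)
      also have "\<dots> = (-1) ^ k * (\<Sum>g\<in>?G. \<Sum>d\<in>compositions k. (-1) ^ ss_rank d * ?h d g)"
        by (simp add: sum_distrib_left)
      also have "\<dots> = (-1) ^ k * (\<Sum>d\<in>compositions k. \<Sum>g\<in>?G. (-1) ^ ss_rank d * ?h d g)"
        by (rule arg_cong[where f = "\<lambda>z. (-1) ^ k * z"], rule sum.swap)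
      also have "\<dots> = (-1) ^ k * (\<Sum>d\<in>compositions k. (-1) ^ ss_rank d * (\<Sum>g\<in>?G. ?h d g))"
        by (simp add: sum_distrib_left)
      finally have e1: "(\<Sum>g\<in>?G. antipode k (\<lambda>_. 1) (upblk k (adinv n g x)))
          = (-1) ^ k * (\<Sum>d\<in>compositions k. (-1) ^ ss_rank d * (\<Sum>g\<in>?G. ?h d g))" .
      have "(1 / ?P2) * (\<Sum>g\<in>?G. antipode k (\<lambda>_. 1) (upblk k (adinv n g x)))
          = (-1) ^ k * (\<Sum>d\<in>compositions k. (-1) ^ ss_rank d * ((1 / ?P2) * (\<Sum>g\<in>?G. ?h d g)))"
        unfolding e1 by (simp add: sum_distrib_left mult_ac)
      also have "\<dots> = (-1) ^ k * (\<Sum>d\<in>compositions k. (-1) ^ ss_rank d * ?NP (d @ [n - k]))"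
      proof (intro arg_cong[where f = "\<lambda>z. (-1) ^ k * z"] sum.cong refl)
        fix d assume "d \<in> compositions k"
        then have d: "sum_list d = k" by (simp add: compositions_def)
        show "(-1) ^ ss_rank d * ((1 / ?P2) * (\<Sum>g\<in>?G. ?h d g)) = (-1) ^ ss_rank d * ?NP (d @ [n - k])"
          using key[OF less_imp_le[OF k] d, of x] by simp
      qed
      finally show ?thesis .
    qed
    have "antipode n (\<lambda>_. 1) x = - (\<Sum>k<n. (-1) ^ k * (\<Sum>d\<in>compositions k. (-1) ^ ss_rank d * ?NP (d @ [n - k])))"
      unfolding A using T by simp
    also have "\<dots> = (\<Sum>k<n. \<Sum>d\<in>compositions k. (-1) ^ n * ((-1) ^ ss_rank (d @ [n - k]) * ?NP (d @ [n - k])))"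
    proof -
      have "(\<Sum>k<n. \<Sum>d\<in>compositions k. (-1) ^ n * ((-1) ^ ss_rank (d @ [n - k]) * ?NP (d @ [n - k])))
          = (\<Sum>k<n. \<Sum>d\<in>compositions k. - ((-1) ^ k * ((-1) ^ ss_rank d * ?NP (d @ [n - k]))))"
      proof (intro sum.cong refl)
        fix k d assume k: "k \<in> {..<n}" and d: "d \<in> compositions k"
        have L: "length d \<le> k" using d length_le_sum by (auto simp: compositions_def)
        have s1: "ss_rank (d @ [n - k]) = n - Suc (length d)" using d k by (auto simp: ss_rank_def compositions_def)
        have s2: "ss_rank d = k - length d" using d by (auto simp: ss_rank_def compositions_def)
        have "(-1::complex) ^ n * (-1) ^ ss_rank (d @ [n - k]) = - ((-1) ^ k * (-1) ^ ss_rank d)"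
          unfolding s1 s2 by (rule sign_lemma[OF L]) (use k in simp)
        then show "(-1) ^ n * ((-1) ^ ss_rank (d @ [n - k]) * ?NP (d @ [n - k]))
            = - ((-1) ^ k * ((-1) ^ ss_rank d * ?NP (d @ [n - k])))"
          by (metis (no_types, lifting) mult.assoc mult_minus_left)
      qed
      then show ?thesis by (simp add: sum_negf sum_distrib_left)
    qed
    also have "\<dots> = (-1) ^ n * StF n x"
      unfolding StF_def compositions_reindex[OF pos] by (simp add: sum_distrib_left)
    finally show ?thesis .
  qed
qed

theorem mainTheorem9:
  fixes n :: nat and x :: "('a::{finite,field}) mat"
  assumes "x \<in> gl n"
  shows "Steinberg n x = (-1) ^ n * antipode n (\<lambda>_. 1) x"
  by (simp add: Steinberg_StF main_lemma)

end
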